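(* Let $I=(i_1<i_2<\cdots<i_r)$ be strictly increasing with $r\geq1$, and let $\chi_I=\sum_{\varepsilon\in\{0,1\}^r}a_I^\varepsilon w_I^\varepsilon$ with $a_I^\varepsilon\in\mathcal B$. Then: (A) if $\alpha(\chi_I)+\beta(\chi_I)=\gamma(\chi_I)$, then $\chi_I=a(S_I-w_I)$ for some $a\in\mathcal B$; (B) if $\beta(\chi_I)=\gamma(\chi_I)+\delta(\chi_I)$, then $\chi_I=a(S_I-w'_I)$ for some $a\in\mathcal B$.
   Context: $\mathcal B$ is a graded commutative rational algebra and $W$ a graded rational vector space concentrated in odd degrees with basis $\{w_i\}$ indexed by a totally ordered set. In $\mathcal B\otimes\land W\otimes\land W$ write $w_i^0=w_i=1\otimes w_i\otimes1$, $w_i^1=w'_i=1\otimes1\otimes w_i$, $w_I^\varepsilon=w_{i_1}^{\epsilon_1}\cdots w_{i_r}^{\epsilon_r}$, $w_I=w_{i_1}\cdots w_{i_r}$, $w'_I=w'_{i_1}\cdots w'_{i_r}$, $S_I=(w_{i_1}+w'_{i_1})\cdots(w_{i_r}+w'_{i_r})$. In $\mathcal B\otimes\land W^{\otimes3}$ write $w,w',w''$ for $w$ in the three copies. Algebra maps $\alpha,\beta,\gamma,\delta\colon\mathcal B\otimes\land W\otimes\land W\to\mathcal B\otimes\land W\otimes\land W\otimes\land W$, identity on $\mathcal B$: $\alpha(w)=w,\alpha(w')=w'$; $\beta(w)=w+w',\beta(w')=w''$; $\gamma(w)=w,\gamma(w')=w'+w''$; $\delta(w)=w',\delta(w')=w''$.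 *)

theory Defs
  imports Main "HOL-Library.Product_Lexorder"
begin

text \<open>It is modelled as a ring 'b with a
  grading Bg (Bg n = homogeneous elements of degree n) such that 'b is the direct sum of the
  Bg n, the grading is multiplicative, graded commutativity holds, and every positive integer
  is invertible (i.e. 'b is a Q-algebra).\<close>

definition graded_comm_rational_algebra :: "(int \<Rightarrow> 'b::ring_1 set) \<Rightarrow> bool" where
  "graded_comm_rational_algebra Bg \<longleftrightarrow>
     (\<forall>n. 0 \<in> Bg n \<and> (\<forall>x\<in>Bg n. \<forall>y\<in>Bg n. x + y \<in> Bg n \<and> - x \<in> Bg n)) \<and>
     1 \<in> Bg 0 \<and>
     (\<forall>m n x y. x \<in> Bg m \<longrightarrow> y \<in> Bg n \<longrightarrow> x * y \<in> Bg (m + n)) \<and>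
     (\<forall>x. \<exists>!c :: int \<Rightarrow> 'b. finite {n. c n \<noteq> 0} \<and> (\<forall>n. c n \<in> Bg n) \<and>
            x = sum c {n. c n \<noteq> 0}) \<and>
     (\<forall>m n x y. x \<in> Bg m \<longrightarrow> y \<in> Bg n \<longrightarrow>
            x * y = (if even (m * n) then y * x else - (y * x))) \<and>
     (\<forall>k::nat. k > 0 \<longrightarrow> (\<exists>y::'b. of_nat k * y = 1))"

text \<open>An element of the exterior algebra (over Z) on a totally ordered set of generators 'g
  is given by its coefficient function on finite sets of generators; the set S stands for the
  monomial obtained by multiplying the elements of S in increasing order.
  An element of B \<otimes> (exterior algebra) is likewise a function from sets of generators to 'b
  (its coordinates in the basis of monomials, B-scalars written on the left).\<close>

type_synonym 'g ext = "'g set \<Rightarrow> int"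

definition ext_sign :: "'g::linorder set \<Rightarrow> 'g set \<Rightarrow> int" where
  "ext_sign S T = (-1) ^ card {(x, y). x \<in> S \<and> y \<in> T \<and> y < x}"

text \<open>Product: mono(S) * mono(T) = ext_sign S T * mono(S \<union> T) if S, T disjoint, else 0.\<close>
definition ext_mul :: "'g::linorder ext \<Rightarrow> 'g ext \<Rightarrow> 'g ext" where
  "ext_mul f g = (\<lambda>U. \<Sum>S\<in>Pow U. ext_sign S (U - S) * f S * g (U - S))"

definition ext_one :: "'g ext" where
  "ext_one = (\<lambda>U. if U = {} then 1 else 0)"

definition ext_gen :: "'g \<Rightarrow> 'g ext" where
  "ext_gen x = (\<lambda>U. if U = {x} then 1 else 0)"

definition ext_add :: "'g ext \<Rightarrow> 'g ext \<Rightarrow> 'g ext" where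
  "ext_add f g = (\<lambda>U. f U + g U)"

definition ext_prod :: "'g::linorder ext list \<Rightarrow> 'g ext" where
  "ext_prod xs = foldr ext_mul xs ext_one"

text \<open>Generators of \<and>W \<otimes> \<and>W \<otimes> \<and>W: pairs (i, k), meaning w_i in the k-th copy
  (k = 0: w, k = 1: w', k = 2: w''). \<and>W \<otimes> \<and>W is the subalgebra on copies 0 and 1.
  Since W is concentrated in odd degrees, all generators anticommute.\<close>

definition wg :: "'i \<Rightarrow> nat \<Rightarrow> ('i::linorder \<times> nat) ext" where
  "wg i k = ext_gen (i, k)"

definition eps_set :: "nat \<Rightarrow> nat list set" where
  "eps_set r = {e. length e = r \<and> set e \<subseteq> {0, 1}}"

text \<open>Image of the monomial w_I^\<epsilon> under an algebra map given on generators by phi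
  (phi i k = image of w_i^k).\<close>
definition mono_img :: "('i \<Rightarrow> nat \<Rightarrow> ('i::linorder \<times> nat) ext) \<Rightarrow> 'i list \<Rightarrow> nat list
    \<Rightarrow> ('i \<times> nat) ext" where
  "mono_img phi I e = ext_prod (map2 phi I e)"

text \<open>Image of \<chi>_I = \<Sum>_\<epsilon> a_I^\<epsilon> w_I^\<epsilon> under the algebra map which is the
  identity on B and is given on generators by phi.\<close>
definition map_chi :: "('i \<Rightarrow> nat \<Rightarrow> ('i::linorder \<times> nat) ext) \<Rightarrow> 'i list
    \<Rightarrow> (nat list \<Rightarrow> 'b::ring_1) \<Rightarrow> ('i \<times> nat) set \<Rightarrow> 'b" where
  "map_chi phi I a = (\<lambda>U. \<Sum>e\<in>eps_set (length I). a e * of_int (mono_img phi I e U))"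

definition chi :: "'i::linorder list \<Rightarrow> (nat list \<Rightarrow> 'b::ring_1) \<Rightarrow> ('i \<times> nat) set \<Rightarrow> 'b" where
  "chi I a = map_chi wg I a"

definition alpha_g :: "'i \<Rightarrow> nat \<Rightarrow> ('i::linorder \<times> nat) ext" where
  "alpha_g i k = (if k = 0 then wg i 0 else wg i 1)"

definition beta_g :: "'i \<Rightarrow> nat \<Rightarrow> ('i::linorder \<times> nat) ext" where
  "beta_g i k = (if k = 0 then ext_add (wg i 0) (wg i 1) else wg i 2)"

definition gamma_g :: "'i \<Rightarrow> nat \<Rightarrow> ('i::linorder \<times> nat) ext" where
  "gamma_g i k = (if k = 0 then wg i 0 else ext_add (wg i 1) (wg i 2))"

definition delta_g :: "'i \<Rightarrow> nat \<Rightarrow> ('i::linorder \<times> nat) ext" where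
  "delta_g i k = (if k = 0 then wg i 1 else wg i 2)"

definition S_I :: "'i::linorder list \<Rightarrow> ('i \<times> nat) ext" where
  "S_I I = ext_prod (map (\<lambda>i. ext_add (wg i 0) (wg i 1)) I)"

definition w_I :: "'i::linorder list \<Rightarrow> ('i \<times> nat) ext" where
  "w_I I = ext_prod (map (\<lambda>i. wg i 0) I)"

definition w'_I :: "'i::linorder list \<Rightarrow> ('i \<times> nat) ext" where
  "w'_I I = ext_prod (map (\<lambda>i. wg i 1) I)"

end

theory Submission
  imports Defs
begin

definition Lg :: "'i \<Rightarrow> nat set \<Rightarrow> ('i::linorder \<times> nat) ext" where
  "Lg i G = (\<lambda>U. if \<exists>t\<in>G. U = {(i,t)} then 1 else 0)"

lemma mul_step:
  fixes i :: "'i::linorder"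
  assumes P: "\<And>V. P V \<Longrightarrow> finite V \<and> (\<forall>x\<in>V. i < fst x)"
  shows "ext_mul (Lg i G) (\<lambda>V. if P V then 1 else 0) U =
         (if \<exists>t\<in>G. \<exists>V. P V \<and> U = insert (i,t) V then 1 else 0)"
proof (cases "\<exists>t\<in>G. \<exists>V. P V \<and> U = insert (i,t) V")
  case True
  then obtain t V where t: "t\<in>G" "P V" "U = insert (i,t) V" by blast
  have nin: "(i,t) \<notin> V" using P[OF t(2)] by auto
  have UV: "U - {(i,t)} = V" using t(3) nin by auto
  have fin: "finite U" using P[OF t(2)] t(3) by auto
  define g where "g = (\<lambda>S. ext_sign S (U - S) * Lg i G S * (if P (U - S) then 1 else 0))"
  have z: "\<forall>S\<in>Pow U - {{(i,t)}}. g S = 0"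
  proof
    fix S assume S: "S \<in> Pow U - {{(i,t)}}"
    show "g S = 0"
    proof (cases "\<exists>t'\<in>G. S = {(i,t')}")
      case False thus ?thesis by (simp add: Lg_def g_def)
    next
      case True
      then obtain t' where t': "S = {(i,t')}" by blast
      with S have "(i,t) \<in> U - S" using t(3) by auto
      have "\<not> P (U - S)"
      proof
        assume "P (U - S)"
        hence "i < fst (i,t)" using P \<open>(i,t) \<in> U - S\<close> by blast
        thus False by simp
      qed
      thus ?thesis by (simp add: g_def)
    qed
  qed
  have "ext_mul (Lg i G) (\<lambda>V. if P V then 1 else 0) U = sum g (Pow U)"
    by (simp add: ext_mul_def g_def)
  also have "\<dots> = g {(i,t)} + sum g (Pow U - {{(i,t)}})"
    by (rule sum.remove) (use fin t(3) in auto)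
  also have "sum g (Pow U - {{(i,t)}}) = 0" using z by simp
  also have "ext_sign {(i,t)} V = 1"
  proof -
    have E: "{(x, y). x \<in> {(i,t)} \<and> y \<in> V \<and> y < x} = {}"
    proof -
      have "\<forall>y\<in>V. \<not> y < (i,t)"
      proof
        fix y assume "y \<in> V"
        hence "i < fst y" using P[OF t(2)] by blast
        thus "\<not> y < (i,t)" by (cases y) (auto simp: less_prod_def)
      qed
      thus ?thesis by auto
    qed
    show ?thesis unfolding ext_sign_def E by simp
  qed
  hence "g {(i,t)} = 1" using UV t by (simp add: g_def Lg_def)
  finally show ?thesis using True by simp
next
  case False
  have "ext_mul (Lg i G) (\<lambda>V. if P V then 1 else 0) U = 0"
    unfolding ext_mul_def
  proof (rule sum.neutral, rule ballI)
    fix S assume S: "S \<in> Pow U"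
    show "ext_sign S (U - S) * Lg i G S * (if P (U - S) then 1 else 0) = 0"
    proof (cases "\<exists>t'\<in>G. S = {(i,t')} \<and> P (U - S)")
      case True
      then obtain t' where "t' \<in> G" "S = {(i,t')}" "P (U - S)" by blast
      moreover have "U = insert (i,t') (U - S)" using S \<open>S = {(i,t')}\<close> by auto
      ultimately show ?thesis using False by blast
    next
      case False thus ?thesis by (auto simp: Lg_def)
    qed
  qed
  thus ?thesis using False by simp
qed

lemma prod_Lg:
  "sorted_wrt (<) I \<Longrightarrow> length e = length I \<Longrightarrow>
   ext_prod (map2 (\<lambda>i k. Lg i (A k)) I e) =
   (\<lambda>U. if \<exists>\<tau>. list_all2 (\<lambda>t k. t \<in> A k) \<tau> e \<and> U = set (zip I \<tau>) then 1 else 0)"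
proof (induction I arbitrary: e)
  case Nil then show ?case by (auto simp: ext_prod_def ext_one_def)
next
  case (Cons i I)
  then obtain k e' where e: "e = k # e'" by (cases e) auto
  define P where "P = (\<lambda>V. \<exists>\<tau>. list_all2 (\<lambda>t k. t \<in> A k) \<tau> e' \<and> V = set (zip I \<tau>))"
  have IH: "ext_prod (map2 (\<lambda>i k. Lg i (A k)) I e') = (\<lambda>V. if P V then 1 else 0)"
    using Cons e by (auto simp: P_def)
  have PP: "\<And>V. P V \<Longrightarrow> finite V \<and> (\<forall>x\<in>V. i < fst x)"
    using Cons.prems(1) by (auto simp: P_def dest: set_zip_leftD)
  show ?case
  proof
    fix U
    have "ext_prod (map2 (\<lambda>i k. Lg i (A k)) (i#I) e) U
        = ext_mul (Lg i (A k)) (ext_prod (map2 (\<lambda>i k. Lg i (A k)) I e')) U"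
      by (simp add: e ext_prod_def)
    also have "\<dots> = (if \<exists>t\<in>A k. \<exists>V. P V \<and> U = insert (i,t) V then 1 else 0)"
      unfolding IH by (rule mul_step[OF PP])
    also have "(\<exists>t\<in>A k. \<exists>V. P V \<and> U = insert (i,t) V) \<longleftrightarrow>
       (\<exists>\<tau>. list_all2 (\<lambda>t k. t \<in> A k) \<tau> e \<and> U = set (zip (i#I) \<tau>))"
    proof
      assume "\<exists>t\<in>A k. \<exists>V. P V \<and> U = insert (i,t) V"
      then obtain t \<tau> where "t \<in> A k" "list_all2 (\<lambda>t k. t \<in> A k) \<tau> e'" "U = insert (i,t) (set (zip I \<tau>))"
        by (auto simp: P_def)
      thus "\<exists>\<tau>. list_all2 (\<lambda>t k. t \<in> A k) \<tau> e \<and> U = set (zip (i#I) \<tau>)"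
        by (intro exI[of _ "t#\<tau>"]) (simp add: e)
    next
      assume "\<exists>\<tau>. list_all2 (\<lambda>t k. t \<in> A k) \<tau> e \<and> U = set (zip (i#I) \<tau>)"
      then obtain z zs where "z \<in> A k" "list_all2 (\<lambda>t k. t \<in> A k) zs e'" "U = insert (i,z) (set (zip I zs))"
        by (auto simp: e list_all2_Cons2)
      thus "\<exists>t\<in>A k. \<exists>V. P V \<and> U = insert (i,t) V" unfolding P_def by blast
    qed
    finally show "ext_prod (map2 (\<lambda>i k. Lg i (A k)) (i#I) e) U = (if \<exists>\<tau>. list_all2 (\<lambda>t k. t \<in> A k) \<tau> e \<and> U = set (zip (i#I) \<tau>) then 1 else 0)" .
  qed
qed

lemma zip_inj:
  assumes "distinct I" "length \<tau> = length I" "length \<tau>' = length I"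
    "set (zip I \<tau>) = set (zip I \<tau>')"
  shows "\<tau> = \<tau>'"
proof (rule nth_equalityI)
  show "length \<tau> = length \<tau>'" using assms by simp
  fix k assume k: "k < length \<tau>"
  have "(I!k, \<tau>!k) \<in> set (zip I \<tau>)" unfolding set_zip using k assms(2) by force
  hence "(I!k, \<tau>!k) \<in> set (zip I \<tau>')" using assms by simp
  then obtain j where j0: "j < min (length I) (length \<tau>')" "(I!k, \<tau>!k) = (I!j, \<tau>'!j)"
    unfolding set_zip by blast
  hence j: "j < length I" "I!k = I!j" "\<tau>!k = \<tau>'!j" by auto
  have "j = k" using j k assms nth_eq_iff_index_eq by fastforce
  thus "\<tau>!k = \<tau>'!k" using j by simp
qed

lemma prod_Z:
  assumes "sorted_wrt (<) I" "length e = length I" "length \<sigma> = length I"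
  shows "ext_prod (map2 (\<lambda>i k. Lg i (A k)) I e) (set (zip I \<sigma>)) =
     (if list_all2 (\<lambda>t k. t \<in> A k) \<sigma> e then 1 else 0)"
proof -
  have d: "distinct I" using assms(1) by (simp add: strict_sorted_iff)
  have "(\<exists>\<tau>. list_all2 (\<lambda>t k. t \<in> A k) \<tau> e \<and> set (zip I \<sigma>) = set (zip I \<tau>))
        \<longleftrightarrow> list_all2 (\<lambda>t k. t \<in> A k) \<sigma> e"
  proof
    assume "\<exists>\<tau>. list_all2 (\<lambda>t k. t \<in> A k) \<tau> e \<and> set (zip I \<sigma>) = set (zip I \<tau>)"
    then obtain \<tau> where t: "list_all2 (\<lambda>t k. t \<in> A k) \<tau> e" "set (zip I \<sigma>) = set (zip I \<tau>)" by blast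
    have "length \<tau> = length I" using t(1) assms(2) list_all2_lengthD by fastforce
    hence "\<sigma> = \<tau>" using zip_inj[OF d assms(3)] t(2) by blast
    thus "list_all2 (\<lambda>t k. t \<in> A k) \<sigma> e" using t by simp
  qed blast
  thus ?thesis using prod_Lg[OF assms(1,2)] by simp
qed

lemma prod_nZ:
  assumes "sorted_wrt (<) I" "length e = length I" "\<not> (\<exists>\<tau>. length \<tau> = length I \<and> U = set (zip I \<tau>))"
  shows "ext_prod (map2 (\<lambda>i k. Lg i (A k)) I e) U = 0"
proof -
  have "\<not> (\<exists>\<tau>. list_all2 (\<lambda>t k. t \<in> A k) \<tau> e \<and> U = set (zip I \<tau>))"
    using assms(2,3) list_all2_lengthD by fastforce
  thus ?thesis using prod_Lg[OF assms(1,2)] by simp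
qed

lemma mapchi_Z:
  assumes "sorted_wrt (<) I" "length \<sigma> = length I"
  shows "map_chi (\<lambda>i k. Lg i (A k)) I a (set (zip I \<sigma>)) =
    (\<Sum>e\<in>eps_set (length I). a e * of_int (if list_all2 (\<lambda>t k. t \<in> A k) \<sigma> e then 1 else 0))"
  unfolding map_chi_def mono_img_def
  by (rule sum.cong) (auto simp: eps_set_def prod_Z[OF assms(1) _ assms(2)])

lemma mapchi_nZ:
  assumes "sorted_wrt (<) I" "\<not> (\<exists>\<tau>. length \<tau> = length I \<and> U = set (zip I \<tau>))"
  shows "map_chi (\<lambda>i k. Lg i (A k)) I a U = 0"
  unfolding map_chi_def mono_img_def
  by (rule sum.neutral) (auto simp: eps_set_def prod_nZ[OF assms(1) _ assms(2)])

lemma sum_eval: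
  assumes "length \<sigma> = r"
    "\<And>t x. t \<in> set \<sigma> \<Longrightarrow> x \<in> {0,1} \<Longrightarrow> Q t x \<Longrightarrow> x = f t"
    "\<And>t. t \<in> set \<sigma> \<Longrightarrow> f t \<in> {0,1}"
  shows "(\<Sum>e\<in>eps_set r. a e * of_int (if list_all2 Q \<sigma> e then 1 else 0)) =
    (if list_all (\<lambda>t. Q t (f t)) \<sigma> then a (map f \<sigma>) else (0::'b::ring_1))"
proof -
  have fin: "finite (eps_set r)"
  proof -
    have "eps_set r \<subseteq> {xs. set xs \<subseteq> {0,1} \<and> length xs = r}" by (auto simp: eps_set_def)
    thus ?thesis using finite_lists_length_eq[of "{0::nat,1}" r] finite_subset by blast
  qed
  have "(\<Sum>e\<in>eps_set r. a e * of_int (if list_all2 Q \<sigma> e then 1 else 0)) =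
        (\<Sum>e\<in>{e\<in>eps_set r. list_all2 Q \<sigma> e}. a e)"
    by (simp add: sum.inter_filter[OF fin] if_distrib cong: if_cong)
  also have "{e\<in>eps_set r. list_all2 Q \<sigma> e} =
     (if list_all (\<lambda>t. Q t (f t)) \<sigma> then {map f \<sigma>} else {})"
  proof (cases "list_all (\<lambda>t. Q t (f t)) \<sigma>")
    case True
    have "set (map f \<sigma>) \<subseteq> {0,1}" 
    proof
      fix x assume "x \<in> set (map f \<sigma>)"
      then obtain t where t: "t \<in> set \<sigma>" "x = f t" by auto
      show "x \<in> {0,1}" using assms(3)[OF t(1)] unfolding t(2) .
    qed
    hence "map f \<sigma> \<in> eps_set r" using assms(1) by (simp add: eps_set_def)
    moreover have "list_all2 Q \<sigma> (map f \<sigma>)" using True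
      by (auto simp: list_all2_conv_all_nth list_all_length)
    moreover have "e = map f \<sigma>" if "e \<in> eps_set r" "list_all2 Q \<sigma> e" for e
    proof (rule nth_equalityI)
      show "length e = length (map f \<sigma>)" using that assms(1) by (auto simp: eps_set_def)
      fix k assume k: "k < length e"
      hence "k < length \<sigma>" using that assms(1) by (auto simp: eps_set_def)
      moreover have "e!k \<in> {0,1}" using that k nth_mem[of k e] unfolding eps_set_def by blast
      moreover have "Q (\<sigma>!k) (e!k)" using that \<open>k < length \<sigma>\<close> by (auto simp: list_all2_conv_all_nth)
      ultimately show "e!k = map f \<sigma> ! k" using assms(2)[of "\<sigma>!k" "e!k"] by simp
    qed
    ultimately have "{e\<in>eps_set r. list_all2 Q \<sigma> e} = {map f \<sigma>}" by blast
    thus ?thesis using True by simp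
  next
    case False
    then obtain k where k: "k < length \<sigma>" "\<not> Q (\<sigma>!k) (f (\<sigma>!k))" by (auto simp: list_all_length)
    have "\<not> list_all2 Q \<sigma> e" if "e \<in> eps_set r" for e
    proof
      assume "list_all2 Q \<sigma> e"
      hence "Q (\<sigma>!k) (e!k)" using k by (auto simp: list_all2_conv_all_nth)
      moreover have "e!k \<in> set e" using that k assms(1) by (simp add: eps_set_def)
      hence "e!k \<in> {0,1}" using that unfolding eps_set_def by blast
      ultimately have "e!k = f (\<sigma>!k)" using assms(2) k by simp
      with \<open>Q (\<sigma>!k) (e!k)\<close> k show False by simp
    qed
    hence "{e\<in>eps_set r. list_all2 Q \<sigma> e} = {}" by blast
    thus ?thesis using False by simp
  qed
  finally show ?thesis by simp
qed

lemma ev: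
  assumes "sorted_wrt (<) I" "length \<sigma> = length I"
    "\<And>t x. t \<in> set \<sigma> \<Longrightarrow> x \<in> {0,1} \<Longrightarrow> t \<in> A x \<Longrightarrow> x = f t"
    "\<And>t. t \<in> set \<sigma> \<Longrightarrow> f t \<in> {0,1}"
  shows "map_chi (\<lambda>i k. Lg i (A k)) I a (set (zip I \<sigma>)) =
    (if list_all (\<lambda>t. t \<in> A (f t)) \<sigma> then a (map f \<sigma>) else 0)"
  unfolding mapchi_Z[OF assms(1,2)]
  by (rule sum_eval[where Q="\<lambda>t k. t \<in> A k"]) (use assms in auto)

lemma map2_rep: "map2 f I (replicate (length I) x) = map (\<lambda>i. f i x) I"
  by (induction I) auto

lemma alpha_eq: "alpha_g = (\<lambda>i k. Lg i (if k = 0 then {0} else {1}))"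
  by (auto simp: fun_eq_iff alpha_g_def wg_def ext_gen_def Lg_def)
lemma beta_eq: "beta_g = (\<lambda>i k. Lg i (if k = 0 then {0,1} else {2}))"
  by (auto simp: fun_eq_iff beta_g_def wg_def ext_gen_def Lg_def ext_add_def)
lemma gamma_eq: "gamma_g = (\<lambda>i k. Lg i (if k = 0 then {0} else {1,2}))"
  by (auto simp: fun_eq_iff gamma_g_def wg_def ext_gen_def Lg_def ext_add_def)
lemma delta_eq: "delta_g = (\<lambda>i k. Lg i (if k = 0 then {1} else {2}))"
  by (auto simp: fun_eq_iff delta_g_def wg_def ext_gen_def Lg_def)
lemma wg_eq: "wg = (\<lambda>i k. Lg i {k})"
  by (auto simp: fun_eq_iff wg_def ext_gen_def Lg_def)

lemma S_eq: "S_I I = ext_prod (map2 (\<lambda>i k. Lg i ((\<lambda>_. {0,1}) k)) I (replicate (length I) (0::nat)))"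
  unfolding map2_rep S_I_def
  by (rule arg_cong[where f=ext_prod]) (auto simp: fun_eq_iff wg_def ext_gen_def Lg_def ext_add_def)
lemma w_eq: "w_I I = ext_prod (map2 (\<lambda>i k. Lg i ((\<lambda>_. {0}) k)) I (replicate (length I) (0::nat)))"
  unfolding map2_rep w_I_def
  by (rule arg_cong[where f=ext_prod]) (auto simp: fun_eq_iff wg_def ext_gen_def Lg_def)
lemma w'_eq: "w'_I I = ext_prod (map2 (\<lambda>i k. Lg i ((\<lambda>_. {1}) k)) I (replicate (length I) (0::nat)))"
  unfolding map2_rep w'_I_def
  by (rule arg_cong[where f=ext_prod]) (auto simp: fun_eq_iff wg_def ext_gen_def Lg_def)

lemma la2_rep: "list_all2 P \<tau> (replicate n x) \<longleftrightarrow> length \<tau> = n \<and> list_all (\<lambda>t. P t x) \<tau>"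
  by (auto simp: list_all2_conv_all_nth list_all_length)

lemma la_const: "length \<tau> = n \<Longrightarrow> list_all (\<lambda>t. t \<in> {c}) \<tau> \<longleftrightarrow> \<tau> = replicate n c"
  by (auto simp: list_all_length list_eq_iff_nth_eq)

lemma other_mem:
  assumes "set (\<tau>::nat list) \<subseteq> {0,1}" "\<tau> \<noteq> replicate (length \<tau>) c" "c \<in> {0,1}"
  shows "1 - c \<in> set \<tau>"
proof (rule ccontr)
  assume "1 - c \<notin> set \<tau>"
  hence "\<forall>x\<in>set \<tau>. x = c" using assms(1,3) by auto
  hence "\<tau> = replicate (length \<tau>) c" by (simp add: list_eq_iff_nth_eq)
  thus False using assms(2) by simp
qed

lemma chi_Z:
  assumes "sorted_wrt (<) I" "length \<tau> = length I"
  shows "chi I a (set (zip I \<tau>)) = (if set \<tau> \<subseteq> {0,1} then a \<tau> else 0)"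
proof -
  have "chi I a (set (zip I \<tau>)) = (if list_all (\<lambda>t. t \<in> {if t = 1 then 1 else 0}) \<tau>
      then a (map (\<lambda>t. if t = 1 then 1 else 0) \<tau>) else 0)"
    unfolding chi_def wg_eq
    by (rule ev[where A="\<lambda>k. {k}", OF assms]) auto
  also have "list_all (\<lambda>t. t \<in> {if t = 1 then 1 else 0}) \<tau> \<longleftrightarrow> set \<tau> \<subseteq> {0,1}"
    by (auto simp: list_all_iff)
  also have "set \<tau> \<subseteq> {0,1} \<Longrightarrow> map (\<lambda>t. if t = 1 then 1 else 0) \<tau> = \<tau>"
    by (rule map_idI) auto
  ultimately show ?thesis by auto
qed

lemma chi_nZ:
  assumes "sorted_wrt (<) I" "\<not> (\<exists>\<tau>. length \<tau> = length I \<and> U = set (zip I \<tau>))"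
  shows "chi I a U = 0"
  unfolding chi_def wg_eq by (rule mapchi_nZ[where A="\<lambda>k. {k}", OF assms])


lemma S_eq': "S_I I U = ext_prod (map2 (\<lambda>i k. Lg i ((\<lambda>_. {0,1}) k)) I (replicate (length I) (0::nat))) U"
  by (subst S_eq) (rule refl)
lemma w_eq': "w_I I U = ext_prod (map2 (\<lambda>i k. Lg i ((\<lambda>_. {0}) k)) I (replicate (length I) (0::nat))) U"
  by (subst w_eq) (rule refl)
lemma w'_eq': "w'_I I U = ext_prod (map2 (\<lambda>i k. Lg i ((\<lambda>_. {1}) k)) I (replicate (length I) (0::nat))) U"
  by (subst w'_eq) (rule refl)
lemma S_Z: assumes "sorted_wrt (<) I" "length \<tau> = length I" shows
   "S_I I (set (zip I \<tau>)) = (if set \<tau> \<subseteq> {0,1} then 1 else 0)"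
proof -
  have "S_I I (set (zip I \<tau>)) = ext_prod (map2 (\<lambda>i k. Lg i ((\<lambda>_. {0,1}) k)) I (replicate (length I) (0::nat))) (set (zip I \<tau>))" by (rule S_eq')
  also have "\<dots> = (if list_all2 (\<lambda>t k. t \<in> (\<lambda>_. {0,1}) k) \<tau> (replicate (length I) (0::nat)) then 1 else 0)"
    by (rule prod_Z) (use assms in auto)
  also have "\<dots> = (if set \<tau> \<subseteq> {0,1} then 1 else 0)" using assms by (auto simp: la2_rep list_all_iff)
  finally show ?thesis .
qed
lemma w_Z: assumes "sorted_wrt (<) I" "length \<tau> = length I" shows
   "w_I I (set (zip I \<tau>)) = (if \<tau> = replicate (length I) 0 then 1 else 0)"
proof -
  have "w_I I (set (zip I \<tau>)) = ext_prod (map2 (\<lambda>i k. Lg i ((\<lambda>_. {0}) k)) I (replicate (length I) (0::nat))) (set (zip I \<tau>))" by (rule w_eq')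
  also have "\<dots> = (if list_all2 (\<lambda>t k. t \<in> (\<lambda>_. {0}) k) \<tau> (replicate (length I) (0::nat)) then 1 else 0)"
    by (rule prod_Z) (use assms in auto)
  also have "\<dots> = (if \<tau> = replicate (length I) 0 then 1 else 0)" using assms la_const[of \<tau> "length I" 0] by (simp add: la2_rep)
  finally show ?thesis .
qed
lemma w'_Z: assumes "sorted_wrt (<) I" "length \<tau> = length I" shows
   "w'_I I (set (zip I \<tau>)) = (if \<tau> = replicate (length I) 1 then 1 else 0)"
proof -
  have "w'_I I (set (zip I \<tau>)) = ext_prod (map2 (\<lambda>i k. Lg i ((\<lambda>_. {1}) k)) I (replicate (length I) (0::nat))) (set (zip I \<tau>))" by (rule w'_eq')
  also have "\<dots> = (if list_all2 (\<lambda>t k. t \<in> (\<lambda>_. {1}) k) \<tau> (replicate (length I) (0::nat)) then 1 else 0)"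
    by (rule prod_Z) (use assms in auto)
  also have "\<dots> = (if \<tau> = replicate (length I) 1 then 1 else 0)" using assms la_const[of \<tau> "length I" 1] by (simp add: la2_rep)
  finally show ?thesis .
qed
lemma S_nZ: "sorted_wrt (<) I \<Longrightarrow> \<not> (\<exists>\<tau>. length \<tau> = length I \<and> U = set (zip I \<tau>)) \<Longrightarrow> S_I I U = 0"
  unfolding S_eq' by (rule prod_nZ) auto
lemma w_nZ: "sorted_wrt (<) I \<Longrightarrow> \<not> (\<exists>\<tau>. length \<tau> = length I \<and> U = set (zip I \<tau>)) \<Longrightarrow> w_I I U = 0"
  unfolding w_eq' by (rule prod_nZ) auto
lemma w'_nZ: "sorted_wrt (<) I \<Longrightarrow> \<not> (\<exists>\<tau>. length \<tau> = length I \<and> U = set (zip I \<tau>)) \<Longrightarrow> w'_I I U = 0"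
  unfolding w'_eq' by (rule prod_nZ) auto


lemma evA: assumes "sorted_wrt (<) I" "length \<sigma> = length I"
  shows "map_chi alpha_g I a (set (zip I \<sigma>)) = (if set \<sigma> \<subseteq> {0,1} then a \<sigma> else 0)"
proof -
  have "map_chi alpha_g I a (set (zip I \<sigma>)) =
     (if list_all (\<lambda>t. t \<in> (if (if t = 1 then 1 else 0) = (0::nat) then {0} else {1})) \<sigma>
      then a (map (\<lambda>t. if t = 1 then 1 else 0) \<sigma>) else 0)"
    unfolding alpha_eq by (rule ev[OF assms]) auto
  also have "list_all (\<lambda>t. t \<in> (if (if t = 1 then 1 else 0) = (0::nat) then {0} else {1})) \<sigma>
     \<longleftrightarrow> set \<sigma> \<subseteq> {0,1}" by (auto simp: list_all_iff)
  also have "set \<sigma> \<subseteq> {0,1} \<Longrightarrow> map (\<lambda>t. if t = 1 then 1 else 0) \<sigma> = \<sigma>"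
    by (rule map_idI) auto
  ultimately show ?thesis by auto
qed

lemma evB: assumes "sorted_wrt (<) I" "length \<sigma> = length I"
  shows "map_chi beta_g I a (set (zip I \<sigma>)) =
    (if set \<sigma> \<subseteq> {0,1,2} then a (map (\<lambda>t. if t = 2 then 1 else 0) \<sigma>) else 0)"
proof -
  have "map_chi beta_g I a (set (zip I \<sigma>)) =
     (if list_all (\<lambda>t. t \<in> (if (if t = 2 then 1 else 0) = (0::nat) then {0,1} else {2})) \<sigma>
      then a (map (\<lambda>t. if t = 2 then 1 else 0) \<sigma>) else 0)"
    unfolding beta_eq by (rule ev[OF assms]) auto
  also have "list_all (\<lambda>t. t \<in> (if (if t = 2 then 1 else 0) = (0::nat) then {0,1} else {2})) \<sigma>
     \<longleftrightarrow> set \<sigma> \<subseteq> {0,1,2}" by (auto simp: list_all_iff)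
  finally show ?thesis .
qed

lemma evC: assumes "sorted_wrt (<) I" "length \<sigma> = length I"
  shows "map_chi gamma_g I a (set (zip I \<sigma>)) =
    (if set \<sigma> \<subseteq> {0,1,2} then a (map (\<lambda>t. if t = 0 then 0 else 1) \<sigma>) else 0)"
proof -
  have "map_chi gamma_g I a (set (zip I \<sigma>)) =
     (if list_all (\<lambda>t. t \<in> (if (if t = 0 then 0 else 1) = (0::nat) then {0} else {1,2})) \<sigma>
      then a (map (\<lambda>t. if t = 0 then 0 else 1) \<sigma>) else 0)"
    unfolding gamma_eq by (rule ev[OF assms]) auto
  also have "list_all (\<lambda>t. t \<in> (if (if t = 0 then 0 else 1) = (0::nat) then {0} else {1,2})) \<sigma>
     \<longleftrightarrow> set \<sigma> \<subseteq> {0,1,2}" by (auto simp: list_all_iff)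
  finally show ?thesis .
qed

lemma evD: assumes "sorted_wrt (<) I" "length \<sigma> = length I"
  shows "map_chi delta_g I a (set (zip I \<sigma>)) =
    (if set \<sigma> \<subseteq> {1,2} then a (map (\<lambda>t. if t = 2 then 1 else 0) \<sigma>) else 0)"
proof -
  have "map_chi delta_g I a (set (zip I \<sigma>)) =
     (if list_all (\<lambda>t. t \<in> (if (if t = 2 then 1 else 0) = (0::nat) then {1} else {2})) \<sigma>
      then a (map (\<lambda>t. if t = 2 then 1 else 0) \<sigma>) else 0)"
    unfolding delta_eq by (rule ev[OF assms]) auto
  also have "list_all (\<lambda>t. t \<in> (if (if t = 2 then 1 else 0) = (0::nat) then {1} else {2})) \<sigma>
     \<longleftrightarrow> set \<sigma> \<subseteq> {1,2}" by (auto simp: list_all_iff)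
  finally show ?thesis .
qed

lemma partA:
  fixes I :: "'i::linorder list" and a :: "nat list \<Rightarrow> 'b::ring_1"
  assumes s: "sorted_wrt (<) I"
    and H: "(\<lambda>U. map_chi alpha_g I a U + map_chi beta_g I a U) = map_chi gamma_g I a"
  shows "\<exists>c::'b. chi I a = (\<lambda>U. c * of_int (S_I I U - w_I I U))"
proof -
  define r where "r = length I"
  have H': "\<And>U. map_chi alpha_g I a U + map_chi beta_g I a U = map_chi gamma_g I a U"
    using H by metis
  define z where "z = replicate r (0::nat)"
  define ON where "ON = replicate r (1::nat)"
  have a0: "a z = 0"
  proof -
    have l: "length z = length I" by (simp add: z_def r_def)
    have e: "map (\<lambda>t. if t = 2 then 1 else 0) z = z" "map (\<lambda>t. if t = 0 then 0 else (1::nat)) z = z"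
      "set z \<subseteq> {0,1}" "set z \<subseteq> {0,1,2}"
      by (auto simp: z_def)
    have "a z + a z = a z" using evA[OF s l, of a] evB[OF s l, of a] evC[OF s l, of a] e H'[of "set (zip I z)"] by simp
    thus ?thesis by (metis add_cancel_right_right)
  qed
  have a1: "a \<tau> = a ON" if t: "\<tau> \<in> eps_set r" "\<tau> \<noteq> z" for \<tau>
  proof -
    define \<sigma> where "\<sigma> = map (\<lambda>k. if k = 1 then 2 else (1::nat)) \<tau>"
    have lt: "length \<tau> = r" "set \<tau> \<subseteq> {0,1}" using t by (auto simp: eps_set_def)
    have l: "length \<sigma> = length I" by (simp add: \<sigma>_def lt r_def)
    have "1 - 0 \<in> set \<tau>" by (rule other_mem) (use lt t in \<open>auto simp: z_def\<close>)
    hence "2 \<in> set \<sigma>" by (force simp: \<sigma>_def)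
    hence nA: "\<not> set \<sigma> \<subseteq> {0,1}" by auto
    have s12: "set \<sigma> \<subseteq> {0,1,2}" by (auto simp: \<sigma>_def)
    have mB: "map (\<lambda>t. if t = 2 then 1 else 0) \<sigma> = \<tau>"
      unfolding \<sigma>_def map_map by (rule map_idI) (use lt in auto)
    have mC: "map (\<lambda>t. if t = 0 then 0 else 1) \<sigma> = ON"
      unfolding \<sigma>_def map_map comp_def ON_def by (simp add: list_eq_iff_nth_eq lt)
    show ?thesis using H'[of "set (zip I \<sigma>)"] evA[OF s l, of a] evB[OF s l, of a] evC[OF s l, of a] nA s12 mB mC
      by simp
  qed
  show ?thesis
  proof (intro exI ext)
    fix U
    show "chi I a U = a ON * of_int (S_I I U - w_I I U)"
    proof (cases "\<exists>\<tau>. length \<tau> = length I \<and> U = set (zip I \<tau>)")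
      case False
      thus ?thesis using chi_nZ[OF s False] S_nZ[OF s False] w_nZ[OF s False] by simp
    next
      case True
      then obtain \<tau> where t: "length \<tau> = length I" "U = set (zip I \<tau>)" by blast
      show ?thesis
      proof (cases "set \<tau> \<subseteq> {0,1}")
        case True
        note sub = this
        hence ep: "\<tau> \<in> eps_set r" using t by (simp add: eps_set_def r_def)
        show ?thesis
        proof (cases "\<tau> = z")
          case True thus ?thesis using sub t chi_Z[OF s t(1), of a] S_Z[OF s t(1)] w_Z[OF s t(1)] a0
            by (simp add: z_def r_def)
        next
          case False thus ?thesis using t chi_Z[OF s t(1), of a] S_Z[OF s t(1)] w_Z[OF s t(1)] a1[OF ep False] ep
            by (simp add: z_def r_def eps_set_def)
        qed
      next
        case False
        have "\<tau> \<noteq> replicate (length I) 0" using False by auto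
        thus ?thesis using False t chi_Z[OF s t(1), of a] S_Z[OF s t(1)] w_Z[OF s t(1)] by simp
      qed
    qed
  qed
qed

lemma partB:
  fixes I :: "'i::linorder list" and a :: "nat list \<Rightarrow> 'b::ring_1"
  assumes s: "sorted_wrt (<) I"
    and H: "map_chi beta_g I a = (\<lambda>U. map_chi gamma_g I a U + map_chi delta_g I a U)"
  shows "\<exists>c::'b. chi I a = (\<lambda>U. c * of_int (S_I I U - w'_I I U))"
proof -
  define r where "r = length I"
  have H': "\<And>U. map_chi beta_g I a U = map_chi gamma_g I a U + map_chi delta_g I a U"
    using H by metis
  define z where "z = replicate r (0::nat)"
  define ON where "ON = replicate r (1::nat)"
  have a0: "a ON = 0"
  proof -
    have l: "length ON = length I" by (simp add: ON_def r_def)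
    have e: "map (\<lambda>t. if t = 2 then 1 else 0) ON = z" "map (\<lambda>t. if t = 0 then 0 else (1::nat)) ON = ON"
      "set ON \<subseteq> {1,2}" "set ON \<subseteq> {0,1,2}"
      by (auto simp: z_def ON_def)
    have "a z = a ON + a z" using evD[OF s l, of a] evB[OF s l, of a] evC[OF s l, of a] e H'[of "set (zip I ON)"] by simp
    thus ?thesis by (metis add_cancel_right_left)
  qed
  have a1: "a \<tau> = a z" if t: "\<tau> \<in> eps_set r" "\<tau> \<noteq> ON" for \<tau>
  proof -
    have lt: "length \<tau> = r" "set \<tau> \<subseteq> {0,1}" using t by (auto simp: eps_set_def)
    have l: "length \<tau> = length I" by (simp add: lt r_def)
    have "1 - 1 \<in> set \<tau>" by (rule other_mem) (use lt t in \<open>auto simp: ON_def\<close>)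
    hence nD: "\<not> set \<tau> \<subseteq> {1,2}" by auto
    have s12: "set \<tau> \<subseteq> {0,1,2}" using lt by auto
    have mC: "map (\<lambda>t. if t = 0 then 0 else 1) \<tau> = \<tau>"
      by (rule map_idI) (use lt in auto)
    have mB: "map (\<lambda>t. if t = 2 then 1 else 0) \<tau> = z"
    proof -
      have "\<forall>i<length \<tau>. \<tau>!i \<in> {0,1}" using lt nth_mem by blast
      thus ?thesis using lt by (auto simp: list_eq_iff_nth_eq z_def)
    qed
    show ?thesis using H'[of "set (zip I \<tau>)"] evD[OF s l, of a] evB[OF s l, of a] evC[OF s l, of a] nD s12 mB mC
      by simp
  qed
  show ?thesis
  proof (intro exI ext)
    fix U
    show "chi I a U = a z * of_int (S_I I U - w'_I I U)"
    proof (cases "\<exists>\<tau>. length \<tau> = length I \<and> U = set (zip I \<tau>)")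
      case False
      thus ?thesis using chi_nZ[OF s False] S_nZ[OF s False] w'_nZ[OF s False] by simp
    next
      case True
      then obtain \<tau> where t: "length \<tau> = length I" "U = set (zip I \<tau>)" by blast
      show ?thesis
      proof (cases "set \<tau> \<subseteq> {0,1}")
        case True
        note sub = this
        hence ep: "\<tau> \<in> eps_set r" using t by (simp add: eps_set_def r_def)
        show ?thesis
        proof (cases "\<tau> = ON")
          case True thus ?thesis using sub t chi_Z[OF s t(1), of a] S_Z[OF s t(1)] w'_Z[OF s t(1)] a0
            by (simp add: ON_def r_def)
        next
          case False thus ?thesis using t chi_Z[OF s t(1), of a] S_Z[OF s t(1)] w'_Z[OF s t(1)] a1[OF ep False] ep
            by (simp add: ON_def r_def eps_set_def)
        qed
      next
        case False
        have "\<tau> \<noteq> replicate (length I) 1" using False by auto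
        thus ?thesis using False t chi_Z[OF s t(1), of a] S_Z[OF s t(1)] w'_Z[OF s t(1)] by simp
      qed
    qed
  qed
qed


theorem mainTheorem11:
  fixes Bg :: "int \<Rightarrow> 'b::ring_1 set"
    and I :: "'i::linorder list"
    and a :: "nat list \<Rightarrow> 'b"
  assumes "graded_comm_rational_algebra Bg"
    and "sorted_wrt (<) I"
    and "I \<noteq> []"
  shows "((\<lambda>U. map_chi alpha_g I a U + map_chi beta_g I a U) = map_chi gamma_g I a
            \<longrightarrow> (\<exists>c::'b. chi I a = (\<lambda>U. c * of_int (S_I I U - w_I I U))))
       \<and> (map_chi beta_g I a = (\<lambda>U. map_chi gamma_g I a U + map_chi delta_g I a U)
            \<longrightarrow> (\<exists>c::'b. chi I a = (\<lambda>U. c * of_int (S_I I U - w'_I I U))))"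
  using partA[OF assms(2)] partB[OF assms(2)] by blast

end
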